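(* In the $n$-body problem in ${\bf H}^2$ ($n\ge2$, masses $m_i>0$), there is no solution defined for all $t\in\mathbb R$ of the form ${\bf q}_i(t)=(0,\sinh(\omega t+\alpha_i),\cosh(\omega t+\alpha_i))$, $i=1,\dots,n$, with constants $\omega\ne0$ and $\alpha_i$ (the $\alpha_i$ pairwise distinct, so that the configuration is collisionless); that is, there are no hyperbolic relative equilibria along the fixed geodesic $x=0$. Since Lorentz transformations preserving ${\bf H}^2$ map any geodesic to $x=0$ and preserve the equations, the same holds along any fixed geodesic.
   Context: The $n$-body problem in ${\bf H}^2$ (Weierstrass model): with the Lorentz inner product ${\bf a}\boxdot{\bf b}=a_xb_x+a_yb_y-a_zb_z$ on $\mathbb R^3$, ${\bf H}^2=\{(x,y,z): x^2+y^2-z^2=-1,\ z>0\}$. Bodies of masses $m_1,\dots,m_n>0$ have positions ${\bf q}_i=(x_i,y_i,z_i)\in{\bf H}^2$ and satisfy $$\ddot{\bf q}_i=\sum_{j\ne i}\frac{m_j[{\bf q}_j+({\bf q}_i\boxdot{\bf q}_j){\bf q}_i]}{[({\bf q}_i\boxdot{\bf q}_j)^2-1]^{3/2}}+(\dot{\bf q}_i\boxdot\dot{\bf q}_i){\bf q}_i,\qquad {\bf q}_i\boxdot{\bf q}_i=-1,\ \ {\bf q}_i\boxdot\dot{\bf q}_i=0,$$ $i=1,\dots,n$, defined only for collisionless configurations. Geodesics of ${\bf H}^2$ are its intersections with planes through the origin. A hyperbolic relative equilibrium is a solution defined for all $t\in\mathbb R$ with $x_i$ constant, $y_i=\rho_i\sinh(\omega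 t+\alpha_i)$, $z_i=\rho_i\cosh(\omega t+\alpha_i)$, constants $\omega,\alpha_i$, $\rho_i=(1+x_i^2)^{1/2}$. *)

theory Defs
  imports "HOL-Analysis.Analysis"
begin

type_synonym point3 = "real \<times> real \<times> real"

definition lorentz :: "point3 \<Rightarrow> point3 \<Rightarrow> real" where
  "lorentz a b = fst a * fst b + fst (snd a) * fst (snd b) - snd (snd a) * snd (snd b)"

definition in_H2 :: "point3 \<Rightarrow> bool" where
  "in_H2 p \<longleftrightarrow> lorentz p p = -1 \<and> snd (snd p) > 0"

definition nbody_rhs :: "nat \<Rightarrow> (nat \<Rightarrow> real) \<Rightarrow> (nat \<Rightarrow> point3) \<Rightarrow> point3 \<Rightarrow> nat \<Rightarrow> point3" where
  "nbody_rhs n m q vi i =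
     (\<Sum>j\<in>{..<n} - {i}.
        (m j / (((lorentz (q i) (q j))\<^sup>2 - 1) powr (3/2))) *\<^sub>R (q j + lorentz (q i) (q j) *\<^sub>R q i))
     + lorentz vi vi *\<^sub>R q i"

definition nbody_solution :: "nat \<Rightarrow> (nat \<Rightarrow> real) \<Rightarrow> (nat \<Rightarrow> real \<Rightarrow> point3) \<Rightarrow> bool" where
  "nbody_solution n m q \<longleftrightarrow>
     (\<exists>v a. \<forall>t. \<forall>i<n.
        (q i has_vector_derivative v i t) (at t) \<and>
        (v i has_vector_derivative a i t) (at t) \<and>
        in_H2 (q i t) \<and>
        lorentz (q i t) (v i t) = 0 \<and>
        (\<forall>j<n. j \<noteq> i \<longrightarrow> q i t \<noteq> q j t) \<and>
        a i t = nbody_rhs n m (\<lambda>j. q j t) (v i t) i)"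

end

theory Submission
  imports Defs
begin

lemma dq:
  fixes w c :: real
  shows "((\<lambda>t. (0::real, sinh (w * t + c), cosh (w * t + c))) has_vector_derivative
          (0, w * cosh (w * t + c), w * sinh (w * t + c))) (at t)"
proof -
  have 1: "((\<lambda>t. sinh (w * t + c)) has_real_derivative (w * cosh (w * t + c))) (at t)"
    by (auto intro!: derivative_eq_intros)
  have 2: "((\<lambda>t. cosh (w * t + c)) has_real_derivative (w * sinh (w * t + c))) (at t)"
    by (auto intro!: derivative_eq_intros)
  show ?thesis
    by (intro has_vector_derivative_Pair has_vector_derivative_const
         1[unfolded has_real_derivative_iff_has_vector_derivative]
         2[unfolded has_real_derivative_iff_has_vector_derivative])
qed

lemma dv:
  fixes w c :: real
  shows "((\<lambda>t. (0::real, w * cosh (w * t + c), w * sinh (w * t + c))) has_vector_derivative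
          (0, w * (w * sinh (w * t + c)), w * (w * cosh (w * t + c)))) (at t)"
proof -
  have 1: "((\<lambda>t. w * cosh (w * t + c)) has_real_derivative (w * (w * sinh (w * t + c)))) (at t)"
    by (auto intro!: derivative_eq_intros)
  have 2: "((\<lambda>t. w * sinh (w * t + c)) has_real_derivative (w * (w * cosh (w * t + c)))) (at t)"
    by (auto intro!: derivative_eq_intros)
  show ?thesis
    by (intro has_vector_derivative_Pair has_vector_derivative_const
         1[unfolded has_real_derivative_iff_has_vector_derivative]
         2[unfolded has_real_derivative_iff_has_vector_derivative])
qed

lemma lorentz_sum: "lorentz (sum f S) w = (\<Sum>j\<in>S. lorentz (f j) w)"
  unfolding lorentz_def fst_sum snd_sum
  by (simp add: sum_distrib_right sum_subtractf sum.distrib)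

lemma lorentz_lin: "lorentz (r *\<^sub>R a + b) w = r * lorentz a w + lorentz b w"
  unfolding lorentz_def by (simp add: algebra_simps)

lemma lorentz_scale: "lorentz (r *\<^sub>R a) w = r * lorentz a w"
  unfolding lorentz_def by (simp add: algebra_simps)

lemma lorentz_add: "lorentz (a + b) w = lorentz a w + lorentz b w"
  unfolding lorentz_def by (simp add: algebra_simps)

theorem mainTheorem17:
  fixes n :: nat and m :: "nat \<Rightarrow> real" and \<omega> :: real and \<alpha> :: "nat \<Rightarrow> real"
  assumes "n \<ge> 2"
    and "\<forall>i<n. m i > 0"
    and "\<omega> \<noteq> 0"
    and "\<forall>i<n. \<forall>j<n. i \<noteq> j \<longrightarrow> \<alpha> i \<noteq> \<alpha> j"
  shows "\<not> nbody_solution n m (\<lambda>i t. (0, sinh (\<omega> * t + \<alpha> i), cosh (\<omega> * t + \<alpha> i)))"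
proof
  define q where "q = (\<lambda>i t. (0::real, sinh (\<omega> * t + \<alpha> i), cosh (\<omega> * t + \<alpha> i)))"
  assume "nbody_solution n m (\<lambda>i t. (0, sinh (\<omega> * t + \<alpha> i), cosh (\<omega> * t + \<alpha> i)))"
  then obtain v a where H: "\<And>t i. i < n \<Longrightarrow>
        (q i has_vector_derivative v i t) (at t) \<and>
        (v i has_vector_derivative a i t) (at t) \<and>
        (a i t = nbody_rhs n m (\<lambda>j. q j t) (v i t) i)"
    unfolding nbody_solution_def q_def by blast
  have vE: "v i = (\<lambda>t. (0, \<omega> * cosh (\<omega> * t + \<alpha> i), \<omega> * sinh (\<omega> * t + \<alpha> i)))" if "i < n" for i
  proof
    fix t
    show "v i t = (0, \<omega> * cosh (\<omega> * t + \<alpha> i), \<omega> * sinh (\<omega> * t + \<alpha> i))"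
    proof -
      have D: "(q i has_vector_derivative (0, \<omega> * cosh (\<omega> * t + \<alpha> i), \<omega> * sinh (\<omega> * t + \<alpha> i))) (at t)"
        unfolding q_def by (rule dq)
      show ?thesis using vector_derivative_unique_at[OF conjunct1[OF H[OF that, of t]] D] .
    qed
  qed
  have aE: "a i 0 = (0, \<omega> * (\<omega> * sinh (\<alpha> i)), \<omega> * (\<omega> * cosh (\<alpha> i)))" if "i < n" for i
    using vector_derivative_unique_at[OF conjunct1[OF conjunct2[OF H[OF that, of 0]]], unfolded vE[OF that], OF dv[of \<omega> "\<alpha> i" 0]]
    by simp
  have fin: "finite (\<alpha> ` {..<n})" "\<alpha> ` {..<n} \<noteq> {}" using assms(1) by (auto simp: lessThan_empty_iff)
  obtain i where i: "i < n" "\<alpha> i = Max (\<alpha> ` {..<n})"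
    using Max_in[OF fin] by auto
  have lt: "\<alpha> j < \<alpha> i" if "j < n" "j \<noteq> i" for j
  proof -
    have "\<alpha> j \<le> \<alpha> i" using i fin that by simp
    moreover have "\<alpha> j \<noteq> \<alpha> i" using assms(4) that i by blast
    ultimately show ?thesis by simp
  qed
  define w where "w = (0::real, cosh (\<alpha> i), sinh (\<alpha> i))"
  have q0: "q j 0 = (0, sinh (\<alpha> j), cosh (\<alpha> j))" for j unfolding q_def by simp
  have eq: "a i 0 = nbody_rhs n m (\<lambda>j. q j 0) (v i 0) i" using H[OF i(1)] by blast
  have L: "lorentz (a i 0) w = 0"
    unfolding aE[OF i(1)] w_def lorentz_def by (simp add: algebra_simps)
  have Lqi: "lorentz (q i 0) w = 0" unfolding q0 w_def lorentz_def by (simp add: algebra_simps)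
  have term_neg: "lorentz ((m j / (((lorentz (q i 0) (q j 0))\<^sup>2 - 1) powr (3/2))) *\<^sub>R
        (q j 0 + lorentz (q i 0) (q j 0) *\<^sub>R q i 0)) w < 0"
    if j: "j \<in> {..<n} - {i}" for j
  proof -
    have jl: "\<alpha> j < \<alpha> i" using lt j by auto
    have lqw: "lorentz (q j 0) w = sinh (\<alpha> j - \<alpha> i)"
      unfolding q0 w_def lorentz_def by (simp add: sinh_diff algebra_simps)
    have sn: "sinh (\<alpha> j - \<alpha> i) < 0" using jl by simp
    have c: "lorentz (q i 0) (q j 0) = - cosh (\<alpha> i - \<alpha> j)"
      unfolding q0 lorentz_def by (simp add: cosh_diff algebra_simps)
    have "(lorentz (q i 0) (q j 0))\<^sup>2 - 1 = (sinh (\<alpha> i - \<alpha> j))\<^sup>2"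
      unfolding c using cosh_square_eq[of "\<alpha> i - \<alpha> j"] by simp
    moreover have "sinh (\<alpha> i - \<alpha> j) \<noteq> 0" using jl by simp
    ultimately have pos: "((lorentz (q i 0) (q j 0))\<^sup>2 - 1) powr (3/2) > 0" by simp
    have mj: "m j > 0" using assms(2) j by auto
    show ?thesis
    proof -
      have n1: "m j * sinh (\<alpha> j - \<alpha> i) < 0" using mj sn by (rule mult_pos_neg)
      have n2: "m j * sinh (\<alpha> j - \<alpha> i) / ((lorentz (q i 0) (q j 0))\<^sup>2 - 1) powr (3/2) < 0"
        using n1 pos by (rule divide_neg_pos)
      show ?thesis
        unfolding lorentz_scale lorentz_add lorentz_scale Lqi lqw using n2 by simp
    qed
  qed
  have vv: "lorentz (v i 0) (v i 0) = \<omega>^2"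
    unfolding vE[OF i(1)] lorentz_def
    using cosh_square_eq[of "\<alpha> i"] by (simp add: power2_eq_square algebra_simps)
  have ne: "{..<n} - {i} \<noteq> {}"
  proof -
    have "(if i = 0 then 1 else 0) \<in> {..<n} - {i}" using assms(1) by auto
    thus ?thesis by blast
  qed
  have S: "(\<Sum>j\<in>{..<n} - {i}. lorentz ((m j / (((lorentz (q i 0) (q j 0))\<^sup>2 - 1) powr (3/2))) *\<^sub>R
        (q j 0 + lorentz (q i 0) (q j 0) *\<^sub>R q i 0)) w) < (\<Sum>j\<in>{..<n} - {i}. 0)"
    by (rule sum_strict_mono) (use ne term_neg in auto)
  have "lorentz (nbody_rhs n m (\<lambda>j. q j 0) (v i 0) i) w < 0"
    unfolding nbody_rhs_def lorentz_add lorentz_sum lorentz_scale[of _ "q i 0"] Lqi using S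
    by (simp only: mult_zero_right add_0_right sum.neutral_const)
  with eq L show False by simp
qed

end
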